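(* There exists a test.
   Context: Let $\varphi:\omega\to\omega^2$ be the bijection with inverse $\langle n,p\rangle:=\varphi^{-1}(n,p)=\left(\sum_{k\leq n+p}k\right)+p$, and write $\varphi(q)=((q)_0,(q)_1)$. A set $E\subseteq\bigcup_{q\in\omega}2^q\times 2^q$ is a test if: (a) for each $q\in\omega$ there is a unique $(s_q,t_q)\in E\cap(2^q\times 2^q)$; (b) for all $m,p\in\omega$ and $u\in 2^{<\omega}$ there is $v\in 2^{<\omega}$ with $(s_p0uv,t_p1uv)\in E$ and $(|t_p1uv|-1)_0=m$; (c) for each $n>0$ there are $q<n$ and $w\in 2^{<\omega}$ with $s_n=s_q0w$ and $t_n=t_q1w$. (Juxtaposition denotes concatenation of finite binary sequences.) *)

theory Defs
  imports Main
begin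

text \<open>Finite binary sequences are rendered as bool lists (False = 0, True = 1);
  2^q is the set of lists of length q.\<close>

definition pair_code :: "nat \<Rightarrow> nat \<Rightarrow> nat" where
  "pair_code n p = (\<Sum>k\<le>n+p. k) + p"

definition phi :: "nat \<Rightarrow> nat \<times> nat" where
  "phi q = (THE x. pair_code (fst x) (snd x) = q)"

definition proj0 :: "nat \<Rightarrow> nat" where
  "proj0 q = fst (phi q)"

definition st_of :: "(bool list \<times> bool list) set \<Rightarrow> nat \<Rightarrow> bool list \<times> bool list" where
  "st_of E q = (THE x. x \<in> E \<and> length (fst x) = q \<and> length (snd x) = q)"

definition is_test :: "(bool list \<times> bool list) set \<Rightarrow> bool" where
  "is_test E \<longleftrightarrow>
     (\<forall>x\<in>E. length (fst x) = length (snd x)) \<and>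
     (\<forall>q. \<exists>!x. x \<in> E \<and> length (fst x) = q \<and> length (snd x) = q) \<and>
     (\<forall>m p u. \<exists>v.
        (fst (st_of E p) @ [False] @ u @ v, snd (st_of E p) @ [True] @ u @ v) \<in> E \<and>
        proj0 (length (snd (st_of E p) @ [True] @ u @ v) - 1) = m) \<and>
     (\<forall>n>0. \<exists>q<n. \<exists>w.
        fst (st_of E n) = fst (st_of E q) @ [False] @ w \<and>
        snd (st_of E n) = snd (st_of E q) @ [True] @ w)"

end

theory Submission
  imports Defs
begin

lemma T_mono: "N \<le> M \<Longrightarrow> (\<Sum>k\<le>N. k) \<le> (\<Sum>k\<le>M::nat. k)"
  by (rule sum_mono2) auto

lemma pc_lt: assumes "a + b < c + d" shows "pair_code a b < pair_code c d"
proof -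
  have "pair_code a b \<le> (\<Sum>k\<le>a+b. k) + (a+b)" unfolding pair_code_def by simp
  also have "\<dots> < (\<Sum>k\<le>Suc (a+b). k)" by simp
  also have "\<dots> \<le> (\<Sum>k\<le>c+d. k)" using assms by (intro T_mono) simp
  also have "\<dots> \<le> pair_code c d" unfolding pair_code_def by simp
  finally show ?thesis .
qed

lemma pc_inj: assumes "pair_code a b = pair_code c d" shows "a = c \<and> b = d"
proof -
  have "a + b = c + d"
    using pc_lt[of a b c d] pc_lt[of c d a b] assms by (metis nat_neq_iff)
  then show ?thesis using assms unfolding pair_code_def by simp
qed

lemma pc_ge: "a + b \<le> pair_code a b"
proof -
  have "a + b \<le> (\<Sum>k\<le>a+b. k)"
    using sum_mono2[of "{..a+b}" "{a+b}" "\<lambda>k. k"] by auto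
  then show ?thesis unfolding pair_code_def by simp
qed

lemma proj0_pc: "proj0 (pair_code a b) = a"
proof -
  have "phi (pair_code a b) = (a, b)"
    unfolding phi_def
    by (rule the_equality) (auto dest: pc_inj)
  then show ?thesis unfolding proj0_def by simp
qed

fun bin :: "bool list \<Rightarrow> nat" where
  "bin [] = 0"
| "bin (x # u) = 2 * bin u + 1 + (if x then 1 else 0)"

lemma bin_ge: "length u \<le> bin u"
  by (induction u) auto

lemma bin_inj: "bin u = bin u' \<Longrightarrow> u = u'"
proof (induction u arbitrary: u')
  case Nil then show ?case by (cases u') auto
next
  case (Cons x u)
  show ?case
  proof (cases u')
    case Nil with Cons.prems show ?thesis by simp
  next
    case (Cons y w)
    with Cons.prems have e: "2 * bin u + 1 + (if x then 1 else 0) = 2 * bin w + 1 + (if y then 1 else 0)" by simp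
    then have "x = y" by (cases x; cases y) presburger+
    with e have "bin u = bin w" by simp
    with Cons.IH \<open>x = y\<close> Cons show ?thesis by simp
  qed
qed

definition R :: "nat \<Rightarrow> nat \<Rightarrow> bool list \<Rightarrow> nat" where
  "R m p u = pair_code m (pair_code p (bin u)) + 1"

lemma R_inj: "R m p u = R m' p' u' \<Longrightarrow> m = m' \<and> p = p' \<and> u = u'"
  unfolding R_def by (auto dest!: pc_inj bin_inj)

lemma R_ge: "p + length u < R m p u"
  using pc_ge[of m "pair_code p (bin u)"] pc_ge[of p "bin u"] bin_ge[of u]
  unfolding R_def by linarith

definition req :: "nat \<Rightarrow> bool" where
  "req n = (\<exists>m p u. R m p u = n)"

definition dec :: "nat \<Rightarrow> nat \<times> nat \<times> bool list" where
  "dec n = (THE x. R (fst x) (fst (snd x)) (snd (snd x)) = n)"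

lemma dec_R: "dec (R m p u) = (m, p, u)"
  unfolding dec_def by (rule the_equality) (auto dest: R_inj)

definition sel1 :: "nat \<Rightarrow> nat" where
  "sel1 n = (if req n then fst (snd (dec n)) else 0)"

definition sel2 :: "nat \<Rightarrow> bool list" where
  "sel2 n = (if req n then snd (snd (dec n)) @ replicate (n - sel1 n - 1 - length (snd (snd (dec n)))) False
             else replicate (n - 1) False)"

lemma sel1_lt: "0 < n \<Longrightarrow> sel1 n < n"
proof (cases "req n")
  case True
  then obtain m p u where n: "n = R m p u" unfolding req_def by blast
  have "p + length u < n" using R_ge n by simp
  then show ?thesis using n unfolding sel1_def req_def by (auto simp: dec_R)
qed (simp add: sel1_def)

lemma sel2_len: "0 < n \<Longrightarrow> length (sel2 n) = n - sel1 n - 1"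
proof (cases "req n")
  case True
  then obtain m p u where n: "n = R m p u" unfolding req_def by blast
  have "p + length u < n" using R_ge n by simp
  then show ?thesis using n unfolding sel2_def sel1_def req_def by (auto simp: dec_R)
next
  case False
  then show ?thesis unfolding sel2_def sel1_def by simp
qed

function f :: "nat \<Rightarrow> bool list \<times> bool list" where
  "f n = (if n = 0 \<or> n \<le> sel1 n then ([], [])
          else (fst (f (sel1 n)) @ False # sel2 n, snd (f (sel1 n)) @ True # sel2 n))"
  by auto
termination by (relation "measure id") auto

declare f.simps[simp del]

lemma f_len: "length (fst (f n)) = n \<and> length (snd (f n)) = n"
proof (induction n rule: less_induct)
  case (less n)
  show ?case
  proof (cases "n = 0")
    case True then show ?thesis by (simp add: f.simps)
  next
    case False
    then have "sel1 n < n" by (simp add: sel1_lt)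
    with less False sel2_len[of n] show ?thesis by (simp only: f.simps[of n]) auto
  qed
qed

theorem lemma3p3:
  shows "\<exists>E. is_test E"
proof
  let ?E = "range f"
  have uniq: "\<exists>!x. x \<in> ?E \<and> length (fst x) = q \<and> length (snd x) = q" for q
    using f_len by (intro ex1I[of _ "f q"]) auto
  have st: "st_of ?E q = f q" for q
    unfolding st_of_def using f_len by (intro the_equality) auto
  show "is_test ?E"
    unfolding is_test_def
  proof (intro conjI allI impI)
    show "\<forall>x\<in>?E. length (fst x) = length (snd x)" using f_len by auto
    show "\<exists>!x. x \<in> ?E \<and> length (fst x) = q \<and> length (snd x) = q" for q by (rule uniq)
  next
    fix m p u
    let ?n = "R m p u"
    have rq: "req ?n" unfolding req_def by blast
    have s1: "sel1 ?n = p" unfolding sel1_def using rq by (simp add: dec_R)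
    define v where "v = replicate (?n - p - 1 - length u) False"
    have s2: "sel2 ?n = u @ v" unfolding sel2_def v_def using rq s1 by (simp add: dec_R)
    have lt: "p < ?n" using R_ge[of p u m] by simp
    have fn: "f ?n = (fst (f p) @ [False] @ u @ v, snd (f p) @ [True] @ u @ v)"
      using lt s1 s2 by (subst f.simps) auto
    have len: "length (snd (f p) @ [True] @ u @ v) = ?n"
      using f_len[of ?n] fn by simp
    show "\<exists>v. (fst (st_of ?E p) @ [False] @ u @ v, snd (st_of ?E p) @ [True] @ u @ v) \<in> ?E \<and>
        proj0 (length (snd (st_of ?E p) @ [True] @ u @ v) - 1) = m"
    proof (intro exI[of _ v] conjI)
      have "f ?n \<in> ?E" by (rule rangeI)
      then show "(fst (st_of ?E p) @ [False] @ u @ v, snd (st_of ?E p) @ [True] @ u @ v) \<in> ?E"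
        unfolding st fn .
      have "proj0 (?n - 1) = m" unfolding R_def by (simp add: proj0_pc)
      then show "proj0 (length (snd (st_of ?E p) @ [True] @ u @ v) - 1) = m"
        unfolding st len .
    qed
  next
    fix n :: nat assume "0 < n"
    then have "sel1 n < n" by (rule sel1_lt)
    then show "\<exists>q<n. \<exists>w. fst (st_of ?E n) = fst (st_of ?E q) @ [False] @ w \<and>
        snd (st_of ?E n) = snd (st_of ?E q) @ [True] @ w"
      proof (intro exI[of _ "sel1 n"] conjI exI[of _ "sel2 n"])
      have "f n = (fst (f (sel1 n)) @ False # sel2 n, snd (f (sel1 n)) @ True # sel2 n)"
        using \<open>0 < n\<close> \<open>sel1 n < n\<close> by (simp only: f.simps[of n]) simp
      then show "fst (st_of ?E n) = fst (st_of ?E (sel1 n)) @ [False] @ sel2 n"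
        "snd (st_of ?E n) = snd (st_of ?E (sel1 n)) @ [True] @ sel2 n"
        unfolding st by simp_all
    qed
  qed
qed

end
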